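(* Let $S$ be a finite set of $m\ge 1$ discrete probability distributions and let $\mathcal G_S$ be the output of the greedy coupling algorithm on $S$. Then $$H(\mathcal G_S)\le H(\textsc{Profile}_S)+\frac{1+\log_2 e}{2}.$$
   Context: Distributions are finite vectors of nonnegative reals summing to $1$, with states sorted in non-increasing order. Greedy coupling algorithm: maintain the remaining masses of the states of each distribution in $S$. Repeatedly: let $r=\min_{p\in S}\max_j p(j)$; if $r=0$ stop; otherwise append $r$ as the next state of $\mathcal G_S$ and subtract $r$ from the largest remaining state of every distribution in $S$ (ties broken arbitrarily). $\mathcal G_S$ is the resulting sequence of state masses, with $H(\mathcal G_S)=\sum_t \mathcal G_S(t)\log_2(1/\mathcal G_S(t))$. For a distribution $p$, $\textsc{Sketch}_p:(0,1]\to\mathbb R$ is $\textsc{Sketch}_p(x)=p(i)$ for $x\in(\sum_{j>i}p(j),\sum_{j\ge i}p(j)]$; $\textsc{Profile}_S(x)=\min_{p\in S}\textsc{Sketch}_p(x)$; and $H(\textsc{Profile}_S)=\int_0^{1}\log_2(1/\textsc{Profile}_S(x))\,dx$. *)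

theory Defs
  imports "HOL-Analysis.Analysis"
begin

definition is_dist :: "real list \<Rightarrow> bool" where
  "is_dist p \<longleftrightarrow> (\<forall>x\<in>set p. 0 \<le> x) \<and> sum_list p = 1 \<and> sorted_wrt (\<ge>) p"

definition max_state :: "real list \<Rightarrow> real" where
  "max_state q = Max (insert 0 (set q))"

text \<open>Subtract r from a largest remaining state (the first index attaining the
  maximum; any tie-breaking yields the same multiset of remaining masses).\<close>
definition sub_max :: "real \<Rightarrow> real list \<Rightarrow> real list" where
  "sub_max r q = (let i = (LEAST i. i < length q \<and> q ! i = max_state q) in q[i := q ! i - r])"

primrec greedy_run :: "nat \<Rightarrow> real list set \<Rightarrow> real list" where
  "greedy_run 0 Q = []"
| "greedy_run (Suc n) Q =
     (let r = Min (max_state ` Q) in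
      if r = 0 then [] else r # greedy_run n (sub_max r ` Q))"

text \<open>The greedy coupling G_S. Each step zeroes at least one nonzero remaining
  state, so the total number of states is a sufficient step bound and the run
  always stops by reaching r = 0.\<close>
definition greedy_coupling :: "real list set \<Rightarrow> real list" where
  "greedy_coupling S = greedy_run (\<Sum>p\<in>S. length p) S"

definition entropy_list :: "real list \<Rightarrow> real" where
  "entropy_list g = sum_list (map (\<lambda>x. x * log 2 (1 / x)) g)"

definition sketch :: "real list \<Rightarrow> real \<Rightarrow> real" where
  "sketch p x = (THE v. \<exists>i<length p. sum_list (drop (Suc i) p) < x \<and>
                         x \<le> sum_list (drop i p) \<and> v = p ! i)"

definition profile :: "real list set \<Rightarrow> real \<Rightarrow> real" where
  "profile S x = Min ((\<lambda>p. sketch p x) ` S)"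

definition profile_entropy :: "real list set \<Rightarrow> real" where
  "profile_entropy S = integral {0..1} (\<lambda>x. log 2 (1 / profile S x))"

end

theory Submission
  imports Defs
begin


definition kap :: "real \<Rightarrow> real \<Rightarrow> real" where
  "kap v a = (if a < v then 1 else min (v / a) (1/2))"

definition beta :: "real \<Rightarrow> real list \<Rightarrow> real" where
  "beta v p = sum_list (map (\<lambda>a. a * kap v a) p)"

definition relq :: "real \<Rightarrow> real list \<Rightarrow> real list \<Rightarrow> bool" where
  "relq v p q \<longleftrightarrow> length q = length p \<and>
     (\<forall>j<length p. 0 \<le> q!j \<and> q!j \<le> p!j \<and> (q!j = p!j \<or> q!j \<le> p!j - v))"

lemma max_state_ge0: "0 \<le> max_state q"
  unfolding max_state_def by (simp add: Max_ge_iff)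

lemma max_state_ge: "x \<in> set q \<Longrightarrow> x \<le> max_state q"
  unfolding max_state_def by (simp add: Max_ge_iff)

lemma max_state_in: assumes "0 < max_state q" shows "max_state q \<in> set q"
proof -
  have "Max (insert 0 (set q)) \<in> insert 0 (set q)" by (rule Max_in) auto
  with assms show ?thesis unfolding max_state_def by auto
qed

lemma sub_max_facts:
  assumes "0 < r" "r \<le> max_state q"
  defines "i \<equiv> (LEAST i. i < length q \<and> q ! i = max_state q)"
  shows "i < length q" "q ! i = max_state q" "sub_max r q = q[i := q ! i - r]"
proof -
  have "max_state q \<in> set q" using assms max_state_in by simp
  then obtain k where "k < length q" "q ! k = max_state q" by (auto simp: in_set_conv_nth)
  then have "i < length q \<and> q ! i = max_state q"
    using LeastI[of "\<lambda>i. i < length q \<and> q ! i = max_state q" k] unfolding i_def by blast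
  then show "i < length q" "q ! i = max_state q" by auto
  show "sub_max r q = q[i := q ! i - r]" unfolding sub_max_def i_def Let_def by simp
qed

lemma sum_list_upd: "i < length q \<Longrightarrow> sum_list (q[i := x]) = sum_list q - q ! i + (x::real)"
  by (induction q arbitrary: i) (auto split: nat.splits)

lemma sub_max_sum:
  assumes "0 < r" "r \<le> max_state q"
  shows "sum_list (sub_max r q) = sum_list q - r"
  using sub_max_facts[OF assms] sum_list_upd by simp

lemma sub_max_nonneg:
  assumes "0 < r" "r \<le> max_state q" "\<forall>x\<in>set q. 0 \<le> x"
  shows "\<forall>x\<in>set (sub_max r q). 0 \<le> x"
proof -
  define i where "i = (LEAST i. i < length q \<and> q ! i = max_state q)"
  note f = sub_max_facts[OF assms(1,2), folded i_def]
  show ?thesis unfolding f(3)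
    using assms f(1,2) by (auto simp: in_set_conv_nth nth_list_update split: if_splits)
qed

lemma sub_max_rel:
  assumes "0 < r" "r \<le> max_state q" "v \<le> r" "relq v p q"
  shows "relq v p (sub_max r q)"
proof -
  define i where "i = (LEAST i. i < length q \<and> q ! i = max_state q)"
  note f = sub_max_facts[OF assms(1,2), folded i_def]
  show ?thesis using assms f unfolding f(3) relq_def
    by (auto simp: nth_list_update)
qed

lemma greedy_props:
  assumes "finite Q" "Q \<noteq> {}" "\<forall>q\<in>Q. sum_list q = T \<and> (\<forall>x\<in>set q. 0 \<le> x)"
  shows "(\<forall>x\<in>set (greedy_run n Q). 0 < x) \<and> sum_list (greedy_run n Q) \<le> T"
  using assms
proof (induction n arbitrary: Q T)
  case 0
  obtain q where "q \<in> Q" using 0 by auto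
  then have "0 \<le> T" using 0 by (metis sum_list_nonneg)
  then show ?case by simp
next
  case (Suc n)
  define r where "r = Min (max_state ` Q)"
  obtain q0 where q0: "q0 \<in> Q" using Suc by auto
  have T0: "0 \<le> T" using Suc q0 by (metis sum_list_nonneg)
  have r0: "0 \<le> r" unfolding r_def using Suc by (auto simp: max_state_ge0)
  have rle: "\<And>q. q \<in> Q \<Longrightarrow> r \<le> max_state q" unfolding r_def using Suc by auto
  show ?case
  proof (cases "r = 0")
    case True then show ?thesis using T0 by (simp add: r_def[symmetric])
  next
    case False
    then have rp: "0 < r" using r0 by simp
    have IH: "(\<forall>x\<in>set (greedy_run n (sub_max r ` Q)). 0 < x) \<and> sum_list (greedy_run n (sub_max r ` Q)) \<le> T - r"
    proof (rule Suc.IH)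
      show "finite (sub_max r ` Q)" "sub_max r ` Q \<noteq> {}" using Suc.prems by auto
      show "\<forall>q\<in>sub_max r ` Q. sum_list q = T - r \<and> (\<forall>x\<in>set q. 0 \<le> x)"
      proof
        fix q' assume "q' \<in> sub_max r ` Q"
        then obtain q where q: "q \<in> Q" "q' = sub_max r q" by auto
        show "sum_list q' = T - r \<and> (\<forall>x\<in>set q'. 0 \<le> x)"
          using q Suc.prems rle[OF q(1)] rp sub_max_sum sub_max_nonneg by simp
      qed
    qed
    then show ?thesis using False rp by (simp add: r_def[symmetric] Let_def)
  qed
qed

lemma sum_filter_le: "\<forall>x\<in>set xs. 0 \<le> x \<Longrightarrow> sum_list (filter P xs) \<le> sum_list (xs::real list)"
  by (induction xs) auto

lemma kap_nonneg: "0 < v \<Longrightarrow> 0 \<le> kap v a"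
  unfolding kap_def by auto

lemma beta_nonneg: "0 < v \<Longrightarrow> \<forall>x\<in>set p. 0 \<le> x \<Longrightarrow> 0 \<le> beta v p"
  unfolding beta_def by (intro sum_list_nonneg) (auto simp: kap_nonneg)

lemma sum_le_beta:
  assumes "relq v p q" "max_state q < v" "0 < v"
  shows "sum_list q \<le> beta v p"
proof -
  have len: "length q = length p" using assms unfolding relq_def by simp
  have "sum_list q = (\<Sum>j<length p. q ! j)" using len by (simp add: sum_list_sum_nth atLeast0LessThan)
  also have "\<dots> \<le> (\<Sum>j<length p. p ! j * kap v (p ! j))"
  proof (rule sum_mono)
    fix j assume j: "j \<in> {..<length p}"
    have qj: "0 \<le> q!j" "q!j \<le> p!j" "q!j = p!j \<or> q!j \<le> p!j - v"
      using assms(1) j unfolding relq_def by auto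
    have "q!j \<in> set q" using j len by simp
    then have qv: "q!j < v" using max_state_ge assms(2) by fastforce
    show "q ! j \<le> p ! j * kap v (p ! j)"
    proof (cases "p!j < v")
      case True then show ?thesis using qj by (simp add: kap_def)
    next
      case False
      then have pp: "0 < p!j" using assms(3) by simp
      have "q!j \<le> p!j - v" using qj qv False by auto
      then have "q!j \<le> min v (p!j / 2)" using qv False by auto
      also have "min v (p!j/2) = p!j * min (v / p!j) (1/2)" using pp
        by (simp add: min_def field_simps)
      finally show ?thesis using False by (simp add: kap_def)
    qed
  qed
  also have "\<dots> = beta v p" unfolding beta_def by (simp add: sum_list_sum_nth atLeast0LessThan)
  finally show ?thesis .
qed

lemma greedy_small:
  assumes "0 < v" "finite Q" "Q \<noteq> {}" "\<forall>q\<in>Q. sum_list q = T \<and> (\<exists>p\<in>S. relq v p q)"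
    "S \<noteq> {}" "\<forall>p\<in>S. \<forall>x\<in>set p. 0 \<le> x"
  shows "\<exists>p\<in>S. sum_list (filter (\<lambda>x. x < v) (greedy_run n Q)) \<le> beta v p"
  using assms(2-4)
proof (induction n arbitrary: Q T)
  case 0
  obtain p where "p \<in> S" using assms by auto
  then show ?case using beta_nonneg assms by fastforce
next
  case (Suc n)
  define r where "r = Min (max_state ` Q)"
  have nonneg: "\<forall>q\<in>Q. sum_list q = T \<and> (\<forall>x\<in>set q. 0 \<le> x)"
  proof
    fix q assume q: "q \<in> Q"
    then obtain p where "relq v p q" "sum_list q = T" using Suc.prems by auto
    then show "sum_list q = T \<and> (\<forall>x\<in>set q. 0 \<le> x)" unfolding relq_def
      by (auto simp: in_set_conv_nth)
  qed
  have r0: "0 \<le> r" unfolding r_def using Suc by (auto simp: max_state_ge0)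
  have rle: "\<And>q. q \<in> Q \<Longrightarrow> r \<le> max_state q" unfolding r_def using Suc by auto
  obtain p0 where p0: "p0 \<in> S" using assms by auto
  show ?case
  proof (cases "r = 0")
    case True then show ?thesis using p0 beta_nonneg assms by (fastforce simp: r_def[symmetric])
  next
    case False
    then have rp: "0 < r" using r0 by simp
    have gr: "greedy_run (Suc n) Q = r # greedy_run n (sub_max r ` Q)"
      using False by (simp add: r_def[symmetric] Let_def)
    show ?thesis
    proof (cases "v \<le> r")
      case True
      have "\<exists>p\<in>S. sum_list (filter (\<lambda>x. x < v) (greedy_run n (sub_max r ` Q))) \<le> beta v p"
      proof (rule Suc.IH[where T="T - r"])
        show "finite (sub_max r ` Q)" "sub_max r ` Q \<noteq> {}" using Suc.prems by auto
        show "\<forall>q\<in>sub_max r ` Q. sum_list q = T - r \<and> (\<exists>p\<in>S. relq v p q)"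
        proof
          fix q' assume "q' \<in> sub_max r ` Q"
          then obtain q where q: "q \<in> Q" "q' = sub_max r q" by auto
          then obtain p where p: "p \<in> S" "relq v p q" "sum_list q = T" using Suc.prems by auto
          show "sum_list q' = T - r \<and> (\<exists>p\<in>S. relq v p q')"
            using q p rle[OF q(1)] rp sub_max_sum sub_max_rel[OF rp _ True p(2)] by auto
        qed
      qed
      then show ?thesis using gr True by simp
    next
      case False
      obtain qs where qs: "qs \<in> Q" "max_state qs = r"
        unfolding r_def using Suc.prems by (metis (mono_tags, lifting) Min_in finite_imageI image_iff image_is_empty)
      obtain p where p: "p \<in> S" "relq v p qs" using Suc.prems qs by auto
      have props: "(\<forall>x\<in>set (greedy_run (Suc n) Q). 0 < x) \<and> sum_list (greedy_run (Suc n) Q) \<le> T"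
        by (rule greedy_props) (use Suc.prems nonneg in auto)
      have "sum_list (filter (\<lambda>x. x < v) (greedy_run (Suc n) Q)) \<le> sum_list (greedy_run (Suc n) Q)"
        using props by (intro sum_filter_le) auto
      also have "\<dots> \<le> T" using props by simp
      also have "T = sum_list qs" using Suc.prems qs by auto
      also have "\<dots> \<le> beta v p" using sum_le_beta[OF p(2)] qs False assms(1) by simp
      finally show ?thesis using p by blast
    qed
  qed
qed



abbreviation sd :: "real list \<Rightarrow> nat \<Rightarrow> real" where "sd p i \<equiv> sum_list (drop i p)"

lemma sd_mono:
  assumes "\<forall>x\<in>set p. 0 \<le> x" "i \<le> j"
  shows "sd p j \<le> sd p i"
proof -
  have "drop i p = take (j - i) (drop i p) @ drop (j - i) (drop i p)" by (rule append_take_drop_id[symmetric])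
  moreover have "drop (j - i) (drop i p) = drop j p" using assms(2) by simp
  ultimately have "sd p i = sum_list (take (j - i) (drop i p)) + sd p j"
    by (metis sum_list_append)
  moreover have "0 \<le> sum_list (take (j - i) (drop i p))"
    using assms(1) by (intro sum_list_nonneg) (meson in_set_dropD in_set_takeD)
  ultimately show ?thesis by simp
qed

lemma sd_Suc: "i < length p \<Longrightarrow> sd p i = p ! i + sd p (Suc i)"
  by (metis Cons_nth_drop_Suc sum_list.Cons)

lemma sketch_eq:
  assumes "\<forall>x\<in>set p. 0 \<le> x" "i < length p" "sd p (Suc i) < x" "x \<le> sd p i"
  shows "sketch p x = p ! i"
  unfolding sketch_def
proof (rule the_equality)
  show "\<exists>i'<length p. sd p (Suc i') < x \<and> x \<le> sd p i' \<and> p ! i = p ! i'" using assms by blast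
next
  fix v assume "\<exists>i'<length p. sd p (Suc i') < x \<and> x \<le> sd p i' \<and> v = p ! i'"
  then obtain i' where i': "i' < length p" "sd p (Suc i') < x" "x \<le> sd p i'" "v = p ! i'" by blast
  have "i' = i"
  proof (rule ccontr)
    assume "i' \<noteq> i"
    then have "Suc i' \<le> i \<or> Suc i \<le> i'" by auto
    then show False
    proof
      assume "Suc i' \<le> i"
      then have "sd p i \<le> sd p (Suc i')" using sd_mono assms(1) by blast
      then show False using i' assms by linarith
    next
      assume "Suc i \<le> i'"
      then have "sd p i' \<le> sd p (Suc i)" using sd_mono assms(1) by blast
      then show False using i' assms by linarith
    qed
  qed
  then show "v = p ! i" using i' by simp
qed

lemma sketch_exists:
  assumes "\<forall>x\<in>set p. 0 \<le> x" "0 < x" "x \<le> sum_list p"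
  shows "\<exists>i<length p. sd p (Suc i) < x \<and> x \<le> sd p i"
  using assms
proof (induction p)
  case Nil then show ?case by simp
next
  case (Cons a p)
  show ?case
  proof (cases "x \<le> sum_list p")
    case True
    then obtain i where "i < length p" "sd p (Suc i) < x" "x \<le> sd p i" using Cons by auto
    then show ?thesis by (intro exI[of _ "Suc i"]) auto
  next
    case False
    then show ?thesis using Cons.prems by (intro exI[of _ 0]) auto
  qed
qed

lemma sketch_range:
  assumes "\<forall>x\<in>set p. 0 \<le> x" "0 < x" "x \<le> sum_list p"
  shows "0 < sketch p x \<and> sketch p x \<le> sum_list p"
proof -
  obtain i where i: "i < length p" "sd p (Suc i) < x" "x \<le> sd p i" using sketch_exists[OF assms] by blast
  have e: "sketch p x = p ! i" using sketch_eq[OF assms(1) i] .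
  have "sd p i = p ! i + sd p (Suc i)" using sd_Suc i(1) by blast
  moreover have "0 \<le> sd p (Suc i)" using assms(1) by (intro sum_list_nonneg) (meson in_set_dropD)
  moreover have "sd p i \<le> sd p 0" using sd_mono assms(1) by blast
  ultimately show ?thesis using e i by auto
qed

lemma sketch_integral:
  assumes "\<forall>x\<in>set p. 0 \<le> x"
  shows "((\<lambda>x. F (sketch p x)) has_integral sum_list (map (\<lambda>a. a * F a) p)) {0..sum_list p}"
  using assms
proof (induction p)
  case Nil
  show ?case using has_integral_refl(1)[of "\<lambda>x. F (sketch [] x)" "0::real"] by simp
next
  case (Cons a p)
  have a0: "0 \<le> a" and pn: "\<forall>x\<in>set p. 0 \<le> x" using Cons.prems by auto
  have s0: "0 \<le> sum_list p" using pn by (simp add: sum_list_nonneg)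
  have I1: "((\<lambda>x. F (sketch (a # p) x)) has_integral sum_list (map (\<lambda>a. a * F a) p)) {0..sum_list p}"
  proof (rule has_integral_spike_finite[OF _ _ Cons.IH[OF pn]])
    show "finite {0::real}" by simp
    fix x assume x: "x \<in> {0..sum_list p} - {0}"
    then have x0: "0 < x" "x \<le> sum_list p" by auto
    obtain i where i: "i < length p" "sd p (Suc i) < x" "x \<le> sd p i"
      using sketch_exists[OF pn x0] by blast
    have "sketch p x = p ! i" using sketch_eq[OF pn i] .
    moreover have "sketch (a # p) x = (a # p) ! Suc i"
      using i by (intro sketch_eq[OF Cons.prems]) auto
    ultimately show "F (sketch (a # p) x) = F (sketch p x)" by simp
  qed
  have c: "((\<lambda>x. F a) has_integral a * F a) {sum_list p..sum_list p + a}"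
    using has_integral_const_real[of "F a" "sum_list p" "sum_list p + a"] a0 by simp
  have I2: "((\<lambda>x. F (sketch (a # p) x)) has_integral a * F a) {sum_list p..sum_list p + a}"
  proof (rule has_integral_spike_finite[OF _ _ c])
    show "finite {sum_list p}" by simp
    fix x assume x: "x \<in> {sum_list p..sum_list p + a} - {sum_list p}"
    have "sketch (a # p) x = (a # p) ! 0"
      using x by (intro sketch_eq[OF Cons.prems]) auto
    then show "F (sketch (a # p) x) = F a" by simp
  qed
  have "((\<lambda>x. F (sketch (a # p) x)) has_integral (sum_list (map (\<lambda>a. a * F a) p) + a * F a)) {0..sum_list p + a}"
    using has_integral_combine[OF s0 _ I1 I2] a0 by simp
  then show ?case using a0 by (simp add: add.commute mult.commute)
qed



fun psum :: "(real \<Rightarrow> real) \<Rightarrow> real list \<Rightarrow> real" where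
  "psum w (a # b # r) = (b - a) * w b + psum w (b # r)"
| "psum w _ = 0"

lemma step_integral:
  assumes "sorted (a # cs)"
    "\<forall>k. Suc k < length (a # cs) \<longrightarrow> (\<forall>x. (a#cs) ! k < x \<and> x \<le> (a#cs) ! Suc k \<longrightarrow> f x = f ((a#cs) ! Suc k))"
  shows "(f has_integral psum f (a # cs)) {a..last (a # cs)}"
  using assms
proof (induction cs arbitrary: a)
  case Nil
  show ?case using has_integral_refl(1)[of f a] by simp
next
  case (Cons b r)
  have ab: "a \<le> b" using Cons.prems by simp
  have bl: "b \<le> last (b # r)"
  proof (cases r)
    case Nil then show ?thesis by simp
  next
    case (Cons c r')
    then have "last (b # r) \<in> set r" by simp
    then show ?thesis using Cons.prems(1) by auto
  qed
  have c: "((\<lambda>x. f b) has_integral (b - a) * f b) {a..b}"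
    using has_integral_const_real[of "f b" a b] ab by simp
  have I1: "(f has_integral (b - a) * f b) {a..b}"
  proof (rule has_integral_spike_finite[OF _ _ c])
    show "finite {a}" by simp
    fix x assume "x \<in> {a..b} - {a}"
    then show "f x = f b" using Cons.prems(2)[rule_format, of 0 x] by auto
  qed
  have I2: "(f has_integral psum f (b # r)) {b..last (b # r)}"
  proof (rule Cons.IH)
    show "sorted (b # r)" using Cons.prems by simp
    show "\<forall>k. Suc k < length (b # r) \<longrightarrow> (\<forall>x. (b # r) ! k < x \<and> x \<le> (b # r) ! Suc k \<longrightarrow> f x = f ((b # r) ! Suc k))"
    proof (intro allI impI)
      fix k x assume "Suc k < length (b # r)" "(b # r) ! k < x \<and> x \<le> (b # r) ! Suc k"
      then show "f x = f ((b # r) ! Suc k)" using Cons.prems(2)[rule_format, of "Suc k" x] by simp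
    qed
  qed
  show ?case using has_integral_combine[OF ab bl I1 I2] by simp
qed

lemma psum_mono:
  assumes "sorted (a # cs)" "\<forall>x\<in>set cs. f x \<le> g x"
  shows "psum f (a # cs) \<le> psum g (a # cs)"
  using assms
proof (induction cs arbitrary: a)
  case Nil then show ?case by simp
next
  case (Cons b r)
  have "(b - a) * f b \<le> (b - a) * g b" using Cons.prems by (intro mult_left_mono) auto
  moreover have "psum f (b # r) \<le> psum g (b # r)" using Cons by simp
  ultimately show ?case by simp
qed

lemma psum_add_const:
  "psum (\<lambda>x. f x + c) (a # cs) = psum f (a # cs) + c * (last (a # cs) - a)"
proof (induction cs arbitrary: a)
  case Nil then show ?case by simp
next
  case (Cons b r)
  then show ?case by (simp add: algebra_simps)
qed

lemma psum_integral:
  assumes "\<forall>x\<in>set cs. ((\<lambda>s. K s x) has_integral I x) {0..M}"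
  shows "((\<lambda>s. psum (\<lambda>x. K s x) (a # cs)) has_integral psum I (a # cs)) {0..M}"
  using assms
proof (induction cs arbitrary: a)
  case Nil then show ?case using has_integral_0[of "{0..M}"] by simp
next
  case (Cons b r)
  have "((\<lambda>s. (b - a) * K s b) has_integral (b - a) * I b) {0..M}"
    using Cons.prems by (intro has_integral_mult_right) auto
  moreover have "((\<lambda>s. psum (\<lambda>x. K s x) (b # r)) has_integral psum I (b # r)) {0..M}"
    using Cons by simp
  ultimately show ?case by (simp add: has_integral_add)
qed



definition bpts :: "real list set \<Rightarrow> real set" where
  "bpts S = (\<Union>p\<in>S. (\<lambda>i. sd p i) ` {0..length p})"

lemma dist_nonneg: "is_dist p \<Longrightarrow> \<forall>x\<in>set p. 0 \<le> x"
  unfolding is_dist_def by auto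

lemma dist_sum: "is_dist p \<Longrightarrow> sum_list p = 1"
  unfolding is_dist_def by auto

lemma profile_facts:
  assumes "finite S" "S \<noteq> {}" "\<forall>p\<in>S. is_dist p" "0 < x" "x \<le> 1"
  shows "0 < profile S x" "profile S x \<le> 1" "\<And>p. p \<in> S \<Longrightarrow> profile S x \<le> sketch p x"
proof -
  have r: "\<And>p. p \<in> S \<Longrightarrow> 0 < sketch p x \<and> sketch p x \<le> 1"
    using sketch_range dist_nonneg dist_sum assms by metis
  have fin: "finite ((\<lambda>p. sketch p x) ` S)" "(\<lambda>p. sketch p x) ` S \<noteq> {}" using assms by auto
  obtain p where p: "p \<in> S" "profile S x = sketch p x"
    using Min_in[OF fin] unfolding profile_def by auto
  show "0 < profile S x" "profile S x \<le> 1" using p r by auto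
  show "\<And>p. p \<in> S \<Longrightarrow> profile S x \<le> sketch p x" unfolding profile_def using fin by auto
qed

lemma bpts_facts:
  assumes "finite S" "S \<noteq> {}" "\<forall>p\<in>S. is_dist p"
  shows "finite (bpts S)" "0 \<in> bpts S" "1 \<in> bpts S" "\<And>y. y \<in> bpts S \<Longrightarrow> 0 \<le> y \<and> y \<le> 1"
proof -
  show "finite (bpts S)" unfolding bpts_def using assms by auto
  obtain p where p: "p \<in> S" using assms by auto
  have "sd p (length p) = 0" by simp
  then show "0 \<in> bpts S" unfolding bpts_def using p by force
  have "sd p 0 = 1" using p assms dist_sum by simp
  then show "1 \<in> bpts S" unfolding bpts_def using p by force
  fix y assume "y \<in> bpts S"
  then obtain q i where q: "q \<in> S" "i \<le> length q" "y = sd q i" unfolding bpts_def by auto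
  have nn: "\<forall>x\<in>set q. 0 \<le> x" using q assms dist_nonneg by auto
  have "0 \<le> y" using q nn by (simp add: sum_list_nonneg in_set_dropD)
  moreover have "y \<le> sd q 0" using sd_mono[OF nn, of 0 i] q by simp
  ultimately show "0 \<le> y \<and> y \<le> 1" using q assms dist_sum by auto
qed

lemma sorted_le_last: "sorted (xs::real list) \<Longrightarrow> x \<in> set xs \<Longrightarrow> x \<le> last xs"
  by (induction xs) (auto simp: last_in_set)

lemma profile_pieces:
  assumes "finite S" "S \<noteq> {}" "\<forall>p\<in>S. is_dist p"
  shows "\<exists>cs. sorted_wrt (<) (0 # cs) \<and> last (0 # cs) = 1 \<and> (\<forall>x\<in>set cs. 0 < x \<and> x \<le> 1) \<and>
     (\<forall>F. ((\<lambda>x. F (profile S x)) has_integral psum (\<lambda>x. F (profile S x)) (0 # cs)) {0..1})"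
proof -
  note bf = bpts_facts[OF assms]
  define L where "L = sorted_list_of_set (bpts S)"
  have setL: "set L = bpts S" unfolding L_def using bf by simp
  have sL: "sorted_wrt (<) L" unfolding L_def by simp
  have sL': "sorted L" unfolding L_def by simp
  have dL: "distinct L" unfolding L_def by simp
  have Lne: "L \<noteq> []" using setL bf by auto
  obtain h t where Lht: "L = h # t" using Lne by (cases L) auto
  have hd0: "hd L = 0"
  proof -
    have "h \<in> bpts S" using setL Lht by auto
    then have "0 \<le> h" using bf by auto
    moreover have "h \<le> 0" using bf(2) setL sL' Lht by auto
    ultimately show ?thesis using Lht by simp
  qed
  have last1: "last L = 1"
  proof -
    have "last L \<in> set L" using Lne by simp
    then have "last L \<le> 1" using setL bf by auto
    moreover have "1 \<le> last L" using sorted_le_last[OF sL'] bf(3) setL by auto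
    ultimately show ?thesis by simp
  qed
  define cs where "cs = tl L"
  have Lcs: "L = 0 # cs" using Lne hd0 unfolding cs_def by (metis list.collapse)
  have piece: "\<forall>k. Suc k < length L \<longrightarrow> (\<forall>x. L ! k < x \<and> x \<le> L ! Suc k \<longrightarrow> profile S x = profile S (L ! Suc k))"
  proof (intro allI impI)
    fix k x assume k: "Suc k < length L" and x: "L ! k < x \<and> x \<le> L ! Suc k"
    define c where "c = L ! Suc k"
    have cin: "c \<in> bpts S" unfolding c_def using k setL nth_mem by blast
    have kin: "L ! k \<in> bpts S" using k setL nth_mem by (metis Suc_lessD)
    have x0: "0 < x" "x \<le> 1" using x bf kin cin unfolding c_def by force+
    have "\<forall>p\<in>S. sketch p x = sketch p c"
    proof
      fix p assume p: "p \<in> S"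
      have nn: "\<forall>x\<in>set p. 0 \<le> x" using p assms dist_nonneg by auto
      have sp: "sum_list p = 1" using p assms dist_sum by auto
      obtain i where i: "i < length p" "sd p (Suc i) < x" "x \<le> sd p i"
        using sketch_exists[OF nn x0(1)] x0 sp by auto
      have ib: "sd p i \<in> bpts S" unfolding bpts_def using p i by force
      have "c \<le> sd p i"
      proof (rule ccontr)
        assume "\<not> c \<le> sd p i"
        then have lt: "sd p i < c" by simp
        obtain j where j: "j < length L" "L ! j = sd p i" using ib setL by (metis in_set_conv_nth)
        have "L ! k < L ! j" using x i j by linarith
        then have "\<not> j \<le> k" using sorted_nth_mono[OF sL', of j k] k by fastforce
        moreover have "L ! j < L ! Suc k" using lt j unfolding c_def by simp
        then have "\<not> Suc k \<le> j" using sorted_nth_mono[OF sL', of "Suc k" j] j by fastforce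
        ultimately show False by simp
      qed
      then have "sketch p c = p ! i" using i x unfolding c_def by (intro sketch_eq[OF nn]) auto
      moreover have "sketch p x = p ! i" using sketch_eq[OF nn i] .
      ultimately show "sketch p x = sketch p c" by simp
    qed
    then show "profile S x = profile S (L ! Suc k)" unfolding profile_def c_def
      by (metis (mono_tags, lifting) image_cong)
  qed
  have "sorted_wrt (<) (0 # cs)" using sL Lcs by simp
  moreover have "last (0 # cs) = 1" using last1 Lcs by simp
  moreover have "\<forall>x\<in>set cs. 0 < x \<and> x \<le> 1"
  proof
    fix x assume "x \<in> set cs"
    then have "x \<in> set L" "0 < x" using Lcs sL by auto
    then show "0 < x \<and> x \<le> 1" using setL bf by auto
  qed
  moreover have "\<forall>F. ((\<lambda>x. F (profile S x)) has_integral psum (\<lambda>x. F (profile S x)) (0 # cs)) {0..1}"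
  proof
    fix F :: "real \<Rightarrow> real"
    have "((\<lambda>x. F (profile S x)) has_integral psum (\<lambda>x. F (profile S x)) (0 # cs)) {0..last (0 # cs)}"
    proof (rule step_integral)
      show "sorted (0 # cs)" using sL' Lcs by simp
      show "\<forall>k. Suc k < length (0 # cs) \<longrightarrow> (\<forall>x. (0 # cs) ! k < x \<and> x \<le> (0 # cs) ! Suc k \<longrightarrow> F (profile S x) = F (profile S ((0 # cs) ! Suc k)))"
        using piece Lcs by metis
    qed
    then show "((\<lambda>x. F (profile S x)) has_integral psum (\<lambda>x. F (profile S x)) (0 # cs)) {0..1}"
      using last1 Lcs by simp
  qed
  ultimately show ?thesis by blast
qed



lemma powr_neg_log: "0 < a \<Longrightarrow> (2::real) powr (- log 2 (1/a)) = a"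
  by (simp add: log_divide powr_minus_divide)

lemma two_powr_exp: "(2::real) powr (- s) = exp (- s * ln 2)"
  by (simp add: powr_def)

lemma log2e: "log 2 (exp 1) = 1 / ln 2"
  by (simp add: log_def)

lemma kap_integral:
  assumes a: "0 < a" "a \<le> 1" and M: "log 2 (1/a) + 1 \<le> M"
  shows "\<exists>I. ((\<lambda>s. kap (2 powr (-s)) a) has_integral I) {0..M} \<and> I \<le> log 2 (1/a) + (1 + log 2 (exp 1))/2"
proof -
  define s0 where "s0 = log 2 (1/a)"
  have s0: "0 \<le> s0" unfolding s0_def using a by simp
  have ps0: "2 powr (- s0) = a" unfolding s0_def using powr_neg_log a by simp
  have ps1: "2 powr (- (s0 + 1)) = a / 2"
  proof -
    have "(2::real) powr (- s0 - 1) = 2 powr (- s0) / 2 powr 1" by (rule powr_diff)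
    then show ?thesis using ps0 by simp
  qed
  have R1: "((\<lambda>s. kap (2 powr (-s)) a) has_integral s0) {0..s0}"
  proof (rule has_integral_spike_finite[of "{s0}"])
    show "finite {s0}" by simp
    show "((\<lambda>s. 1) has_integral s0) {0..s0}" using has_integral_const_real[of "1::real" 0 s0] s0 by simp
    fix s assume "s \<in> {0..s0} - {s0}"
    then have "s < s0" by auto
    then have "2 powr (- s0) < 2 powr (- s)" by (intro powr_less_mono) auto
    then show "kap (2 powr (-s)) a = 1" using ps0 by (simp add: kap_def)
  qed
  have R2: "((\<lambda>s. kap (2 powr (-s)) a) has_integral 1/2) {s0..s0+1}"
  proof (rule has_integral_spike_finite[of "{}"])
    show "finite {}" by simp
    show "((\<lambda>s. 1/2) has_integral 1/2) {s0..s0+1}" using has_integral_const_real[of "1/2" s0 "s0+1"] by simp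
    fix s assume "s \<in> {s0..s0+1} - {}"
    then have s: "s0 \<le> s" "s \<le> s0 + 1" by auto
    have m1: "2 powr (- s) \<le> 2 powr (- s0)" using s by (intro powr_mono) auto
    have m2: "2 powr (- (s0+1)) \<le> 2 powr (- s)" using s by (intro powr_mono) auto
    have "2 powr (- s) \<le> a" using m1 ps0 by linarith
    moreover have "a / 2 \<le> 2 powr (- s)" using m2 ps1 by linarith
    ultimately have "2 powr (- s) \<le> a" "a / 2 \<le> 2 powr (- s)" by auto
    then show "kap (2 powr (-s)) a = 1/2" using a by (auto simp: kap_def min_def field_simps)
  qed
  define F where "F s = - exp (- s * ln 2) / (a * ln 2)" for s
  have R3: "((\<lambda>s. kap (2 powr (-s)) a) has_integral (F M - F (s0 + 1))) {s0+1..M}"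
  proof (rule has_integral_spike_finite[of "{}"])
    show "finite {}" by simp
    show "((\<lambda>s. exp (- s * ln 2) / a) has_integral (F M - F (s0 + 1))) {s0+1..M}"
    proof (rule fundamental_theorem_of_calculus)
      show "s0 + 1 \<le> M" using M s0_def by simp
      fix s assume "s \<in> {s0+1..M}"
      have "(F has_real_derivative exp (- s * ln 2) / a) (at s within {s0+1..M})"
        unfolding F_def using a by (auto intro!: derivative_eq_intros simp: field_simps)
      then show "(F has_vector_derivative exp (- s * ln 2) / a) (at s within {s0+1..M})"
        by (simp add: has_real_derivative_iff_has_vector_derivative)
    qed
    fix s assume "s \<in> {s0+1..M} - {}"
    then have s: "s0 + 1 \<le> s" by auto
    have m: "2 powr (- s) \<le> 2 powr (- (s0+1))" using s by (intro powr_mono) auto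
    then have "2 powr (- s) \<le> a / 2" using ps1 by linarith
    then show "kap (2 powr (-s)) a = exp (- s * ln 2) / a" using a
      by (auto simp: kap_def min_def field_simps two_powr_exp)
  qed
  have J: "F M - F (s0 + 1) \<le> 1 / (2 * ln 2)"
  proof -
    have "exp (- (s0 + 1) * ln 2) = a / 2" using ps1 two_powr_exp[of "s0+1"] by simp
    then have "F (s0 + 1) = - 1 / (2 * ln 2)" unfolding F_def using a by (simp add: field_simps)
    moreover have "F M \<le> 0" unfolding F_def using a by (simp add: divide_nonpos_pos)
    ultimately show ?thesis by simp
  qed
  have "((\<lambda>s. kap (2 powr (-s)) a) has_integral (s0 + 1/2 + (F M - F (s0 + 1)))) {0..M}"
  proof -
    have "((\<lambda>s. kap (2 powr (-s)) a) has_integral (s0 + 1/2)) {0..s0+1}"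
      using has_integral_combine[OF s0 _ R1 R2] by simp
    then show ?thesis using has_integral_combine[OF _ _ _ R3] s0 M s0_def by simp
  qed
  moreover have "s0 + 1/2 + (F M - F (s0 + 1)) \<le> log 2 (1/a) + (1 + log 2 (exp 1))/2"
    using J unfolding s0_def log2e by (simp add: field_simps)
  ultimately show ?thesis by blast
qed

lemma ind_integral:
  assumes g: "0 < g" "g \<le> 1" and M: "log 2 (1/g) \<le> M"
  shows "((\<lambda>s. if g < 2 powr (-s) then g else 0) has_integral g * log 2 (1/g)) {0..M}"
proof -
  define s0 where "s0 = log 2 (1/g)"
  have s0: "0 \<le> s0" unfolding s0_def using g by simp
  have ps0: "2 powr (- s0) = g" unfolding s0_def using powr_neg_log g by simp
  have R1: "((\<lambda>s. if g < 2 powr (-s) then g else 0) has_integral g * s0) {0..s0}"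
  proof (rule has_integral_spike_finite[of "{s0}"])
    show "finite {s0}" by simp
    show "((\<lambda>s. g) has_integral g * s0) {0..s0}" using has_integral_const_real[of g 0 s0] s0 by (simp add: mult.commute)
    fix s assume "s \<in> {0..s0} - {s0}"
    then have "s < s0" by auto
    then have "2 powr (- s0) < 2 powr (- s)" by (intro powr_less_mono) auto
    then show "(if g < 2 powr (-s) then g else 0) = g" using ps0 by simp
  qed
  have R2: "((\<lambda>s. if g < 2 powr (-s) then g else 0) has_integral 0) {s0..M}"
  proof (rule has_integral_spike_finite[of "{}"])
    show "finite {}" by simp
    show "((\<lambda>s. 0) has_integral 0) {s0..M}" by (rule has_integral_0)
    fix s assume "s \<in> {s0..M} - {}"
    then have "s0 \<le> s" by auto
    then have "2 powr (- s) \<le> 2 powr (- s0)" by (intro powr_mono) auto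
    then show "(if g < 2 powr (-s) then g else 0) = 0" using ps0 by simp
  qed
  show ?thesis using has_integral_combine[OF s0 _ R1 R2] M unfolding s0_def by simp
qed

lemma filter_sum_integral:
  assumes "\<forall>g\<in>set G. 0 < g \<and> g \<le> 1 \<and> log 2 (1/g) \<le> M"
  shows "((\<lambda>s. sum_list (filter (\<lambda>x. x < 2 powr (-s)) G)) has_integral entropy_list G) {0..M}"
  using assms
proof (induction G)
  case Nil then show ?case by (simp add: entropy_list_def has_integral_0)
next
  case (Cons g G)
  have "((\<lambda>s. (if g < 2 powr (-s) then g else 0) + sum_list (filter (\<lambda>x. x < 2 powr (-s)) G)) has_integral (g * log 2 (1/g) + entropy_list G)) {0..M}"
    using Cons by (intro has_integral_add ind_integral) auto
  moreover have "\<And>s. sum_list (filter (\<lambda>x. x < 2 powr (-s)) (g # G)) = (if g < 2 powr (-s) then g else 0) + sum_list (filter (\<lambda>x. x < 2 powr (-s)) G)"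
    by simp
  ultimately show ?case by (simp only: entropy_list_def list.map sum_list.Cons)
qed

lemma layer_cake:
  fixes G :: "real list" and P :: "real \<Rightarrow> real"
  assumes G: "\<forall>g\<in>set G. 0 < g \<and> g \<le> 1" and cs: "sorted_wrt (<) (0#cs)" "last (0#cs) = 1"
    and P: "\<forall>x\<in>set cs. 0 < P x \<and> P x \<le> 1"
    and H: "\<forall>v>0. sum_list (filter (\<lambda>x. x < v) G) \<le> psum (\<lambda>x. kap v (P x)) (0#cs)"
  shows "entropy_list G \<le> psum (\<lambda>x. log 2 (1 / P x)) (0#cs) + (1 + log 2 (exp 1))/2"
proof -
  define M where "M = Max (insert 0 ((\<lambda>g. log 2 (1/g)) ` set G \<union> (\<lambda>x. log 2 (1 / P x) + 1) ` set cs))"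
  have fin: "finite (insert 0 ((\<lambda>g. log 2 (1/g)) ` set G \<union> (\<lambda>x. log 2 (1 / P x) + 1) ` set cs))" by simp
  have MG: "\<And>g. g \<in> set G \<Longrightarrow> log 2 (1/g) \<le> M" unfolding M_def using fin by (intro Max_ge) auto
  have MP: "\<And>x. x \<in> set cs \<Longrightarrow> log 2 (1 / P x) + 1 \<le> M" unfolding M_def using fin by (intro Max_ge) auto
  have h1: "((\<lambda>s. sum_list (filter (\<lambda>x. x < 2 powr (-s)) G)) has_integral entropy_list G) {0..M}"
    using G MG by (intro filter_sum_integral) auto
  define I where "I x = integral {0..M} (\<lambda>s. kap (2 powr (-s)) (P x))" for x
  have Ix: "\<forall>x\<in>set cs. ((\<lambda>s. kap (2 powr (-s)) (P x)) has_integral I x) {0..M} \<and> I x \<le> log 2 (1 / P x) + (1 + log 2 (exp 1))/2"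
  proof
    fix x assume x: "x \<in> set cs"
    obtain J where J: "((\<lambda>s. kap (2 powr (-s)) (P x)) has_integral J) {0..M}" "J \<le> log 2 (1 / P x) + (1 + log 2 (exp 1))/2"
      using kap_integral[of "P x" M] P x MP[OF x] by auto
    then have "I x = J" unfolding I_def by (simp add: integral_unique)
    then show "((\<lambda>s. kap (2 powr (-s)) (P x)) has_integral I x) {0..M} \<and> I x \<le> log 2 (1 / P x) + (1 + log 2 (exp 1))/2"
      using J by simp
  qed
  have h2: "((\<lambda>s. psum (\<lambda>x. kap (2 powr (-s)) (P x)) (0#cs)) has_integral psum I (0#cs)) {0..M}"
    using Ix by (intro psum_integral) auto
  have "entropy_list G \<le> psum I (0#cs)"
    by (rule has_integral_le[OF h1 h2]) (use H in auto)
  also have "\<dots> \<le> psum (\<lambda>x. log 2 (1 / P x) + (1 + log 2 (exp 1))/2) (0#cs)"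
    using cs Ix by (intro psum_mono) (auto simp: strict_sorted_imp_sorted)
  also have "\<dots> = psum (\<lambda>x. log 2 (1 / P x)) (0#cs) + (1 + log 2 (exp 1))/2"
    using psum_add_const cs by simp
  finally show ?thesis .
qed



lemma kap_anti:
  assumes "0 < a" "a \<le> b" "0 < v"
  shows "kap v b \<le> kap v a"
proof -
  have "v / b \<le> v / a" using assms by (intro divide_left_mono) auto
  then show ?thesis using assms by (auto simp: kap_def min_def)
qed

lemma elem_le_sum: "\<forall>x\<in>set xs. 0 \<le> x \<Longrightarrow> y \<in> set xs \<Longrightarrow> y \<le> sum_list (xs::real list)"
  by (induction xs) (auto simp: sum_list_nonneg add_increasing2 add_increasing)

theorem theorem3:
  fixes S :: "real list set"
  assumes "finite S" and "S \<noteq> {}" and "\<forall>p\<in>S. is_dist p"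
  shows "entropy_list (greedy_coupling S) \<le> profile_entropy S + (1 + log 2 (exp 1)) / 2"
proof -
  obtain cs where cs: "sorted_wrt (<) (0 # cs)" "last (0 # cs) = 1" "\<forall>x\<in>set cs. 0 < x \<and> x \<le> 1"
    and int: "\<And>F. ((\<lambda>x. F (profile S x)) has_integral psum (\<lambda>x. F (profile S x)) (0 # cs)) {0..1}"
    using profile_pieces[OF assms] by blast
  define G where "G = greedy_coupling S"
  define n where "n = (\<Sum>p\<in>S. length p)"
  have Gdef: "G = greedy_run n S" unfolding G_def n_def greedy_coupling_def by simp
  have nn: "\<forall>p\<in>S. \<forall>x\<in>set p. 0 \<le> x" using assms(3) dist_nonneg by auto
  have props: "(\<forall>x\<in>set G. 0 < x) \<and> sum_list G \<le> 1"
    unfolding Gdef by (rule greedy_props) (use assms dist_sum nn in auto)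
  have Gr: "\<forall>g\<in>set G. 0 < g \<and> g \<le> 1"
  proof
    fix g assume g: "g \<in> set G"
    have "g \<le> sum_list G" using props g by (intro elem_le_sum) auto
    then show "0 < g \<and> g \<le> 1" using props g by auto
  qed
  have Pr: "\<forall>x\<in>set cs. 0 < profile S x \<and> profile S x \<le> 1"
    using cs(3) profile_facts[OF assms] by auto
  have H: "\<forall>v>0. sum_list (filter (\<lambda>x. x < v) G) \<le> psum (\<lambda>x. kap v (profile S x)) (0#cs)"
  proof (intro allI impI)
    fix v :: real assume v: "0 < v"
    have "\<exists>p\<in>S. sum_list (filter (\<lambda>x. x < v) (greedy_run n S)) \<le> beta v p"
    proof (rule greedy_small[OF v assms(1,2), where T=1])
      show "\<forall>q\<in>S. sum_list q = 1 \<and> (\<exists>p\<in>S. relq v p q)"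
      proof
        fix q assume q: "q \<in> S"
        have "relq v q q" unfolding relq_def using nn q by auto
        then show "sum_list q = 1 \<and> (\<exists>p\<in>S. relq v p q)" using q assms dist_sum by auto
      qed
    qed (use assms nn in auto)
    then obtain p where p: "p \<in> S" "sum_list (filter (\<lambda>x. x < v) G) \<le> beta v p" unfolding Gdef by blast
    have pn: "\<forall>x\<in>set p. 0 \<le> x" and ps: "sum_list p = 1" using p assms nn dist_sum by auto
    have i1: "((\<lambda>x. kap v (sketch p x)) has_integral beta v p) {0..1}"
      using sketch_integral[OF pn, of "kap v"] ps unfolding beta_def by simp
    have i1': "((\<lambda>x. if x = 0 then 0 else kap v (sketch p x)) has_integral beta v p) {0..1}"
      by (rule has_integral_spike_finite[OF _ _ i1, of "{0}"]) auto
    have i2': "((\<lambda>x. if x = 0 then 0 else kap v (profile S x)) has_integral psum (\<lambda>x. kap v (profile S x)) (0#cs)) {0..1}"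
      by (rule has_integral_spike_finite[OF _ _ int, of "{0}"]) auto
    have "beta v p \<le> psum (\<lambda>x. kap v (profile S x)) (0#cs)"
    proof (rule has_integral_le[OF i1' i2'])
      fix x :: real assume x: "x \<in> {0..1}"
      show "(if x = 0 then 0 else kap v (sketch p x)) \<le> (if x = 0 then 0 else kap v (profile S x))"
      proof (cases "x = 0")
        case False
        then have x0: "0 < x" "x \<le> 1" using x by auto
        have "0 < profile S x" "profile S x \<le> sketch p x" using profile_facts[OF assms x0] p by auto
        then show ?thesis using False kap_anti v by simp
      qed simp
    qed
    then show "sum_list (filter (\<lambda>x. x < v) G) \<le> psum (\<lambda>x. kap v (profile S x)) (0#cs)" using p by simp
  qed
  have "entropy_list G \<le> psum (\<lambda>x. log 2 (1 / profile S x)) (0#cs) + (1 + log 2 (exp 1))/2"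
    by (rule layer_cake[OF Gr cs(1,2) Pr H])
  moreover have "profile_entropy S = psum (\<lambda>x. log 2 (1 / profile S x)) (0#cs)"
    unfolding profile_entropy_def using int[of "\<lambda>y. log 2 (1 / y)"] by (simp add: integral_unique)
  ultimately show ?thesis unfolding G_def by simp
qed

end
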